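(* Let $T:X\to X$ be a continuous map on a Hausdorff topological space and $x\in X$. (a) For every $0<\delta\leq1$ the following are equivalent: (i) $x$ is periodic with period at most $\lfloor1/\delta\rfloor$; (ii) $x$ is $\underline{\mathcal{BD}}_\delta$-recurrent; (iii) $x$ is $\underline{\mathcal{D}}_\delta$-recurrent; (iv) $x$ is $\overline{\mathcal{D}}_\delta$-recurrent; (v) $x$ is $\overline{\mathcal{BD}}_\delta$-recurrent. In particular, if $T$ is $\overline{\mathcal{BD}}_\delta$-recurrent then $T^M=I$ for $M=\lfloor1/\delta\rfloor!$. (b) The following are equivalent: (i) $Tx=x$; (ii) $x$ is $\mathcal{I}^*$-recurrent; (iii) $x$ is $\mathcal{TS}$-recurrent; (iv) $x$ is $\mathcal{T}$-recurrent; (v) $x$ is $\overline{\mathcal{BD}}_\delta$-recurrent for some $\delta>1/2$; (vi) for every neighbourhood $U$ of $x$ the set $N(x,U)$ contains two consecutive integers.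
   Context: $N(x,U)=\{n\in\mathbb{N}_0:T^nx\in U\}$. For a family $\mathcal{F}$ of subsets of $\mathbb{N}_0$, $x$ is $\mathcal{F}$-recurrent if $N(x,U)\in\mathcal{F}$ for every neighbourhood $U$ of $x$, and $T$ is $\mathcal{F}$-recurrent if the set of $\mathcal{F}$-recurrent points is dense. Densities of $A\subset\mathbb{N}_0$: $\overline{\mathrm{Bd}}(A)=\lim_{M\to\infty}\max_{n\geq0}\frac{\#(A\cap[n+1,n+M])}{M}$, $\underline{\mathrm{Bd}}(A)=\lim_{M\to\infty}\inf_{n\geq0}\frac{\#(A\cap[n+1,n+M])}{M}$, $\overline{\mathrm{dens}}(A)=\limsup_{M}\frac{\#(A\cap[1,M])}{M}$, $\underline{\mathrm{dens}}(A)=\liminf_M\frac{\#(A\cap[1,M])}{M}$. For $0<\delta\leq1$: $\underline{\mathcal{BD}}_\delta=\{A:\underline{\mathrm{Bd}}(A)\geq\delta\}$, $\overline{\mathcal{BD}}_\delta=\{A:\overline{\mathrm{Bd}}(A)\geq\delta\}$, $\underline{\mathcal{D}}_\delta=\{A:\underline{\mathrm{dens}}(A)\geq\delta\}$, $\overline{\mathcal{D}}_\delta=\{A:\overline{\mathrm{dens}}(A)\geq\delta\}$. $\mathcal{I}^*$ is the family of cofinite subsets of $\mathbb{N}_0$; $\mathcal{T}$ is the family of thick sets ($A$ such that for every $m\in\mathbb{N}$ there is $a_m$ with $[a_m,a_m+m]\subset A$); $\mathcal{TS}$ is the family of thickly syndetic sets ($A$ such that for every $m\in\mathbb{N}$ there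 is a syndetic set $A_m$ with $A_m+[0,m]\subset A$, where syndetic means having bounded gaps). *)

theory Defs
  imports "HOL-Analysis.Analysis"
begin

definition return_set :: "('a \<Rightarrow> 'a) \<Rightarrow> 'a \<Rightarrow> 'a set \<Rightarrow> nat set" where
  "return_set T x U = {n. (T ^^ n) x \<in> U}"

definition nbhd :: "'a::topological_space set \<Rightarrow> 'a \<Rightarrow> bool" where
  "nbhd U x \<longleftrightarrow> (\<exists>V. open V \<and> x \<in> V \<and> V \<subseteq> U)"

definition F_recurrent_point :: "nat set set \<Rightarrow> ('a::topological_space \<Rightarrow> 'a) \<Rightarrow> 'a \<Rightarrow> bool" where
  "F_recurrent_point F T x \<longleftrightarrow> (\<forall>U. nbhd U x \<longrightarrow> return_set T x U \<in> F)"

definition F_recurrent :: "nat set set \<Rightarrow> ('a::topological_space \<Rightarrow> 'a) \<Rightarrow> bool" where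
  "F_recurrent F T \<longleftrightarrow> closure {x. F_recurrent_point F T x} = UNIV"

definition upper_banach_density :: "nat set \<Rightarrow> real" where
  "upper_banach_density A =
     lim (\<lambda>M. SUP n. real (card (A \<inter> {n+1..n+M})) / real M)"

definition lower_banach_density :: "nat set \<Rightarrow> real" where
  "lower_banach_density A =
     lim (\<lambda>M. INF n. real (card (A \<inter> {n+1..n+M})) / real M)"

definition upper_density :: "nat set \<Rightarrow> ereal" where
  "upper_density A = limsup (\<lambda>M. ereal (real (card (A \<inter> {1..M})) / real M))"

definition lower_density :: "nat set \<Rightarrow> ereal" where
  "lower_density A = liminf (\<lambda>M. ereal (real (card (A \<inter> {1..M})) / real M))"

definition BDl :: "real \<Rightarrow> nat set set" where
  "BDl \<delta> = {A. lower_banach_density A \<ge> \<delta>}"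

definition BDu :: "real \<Rightarrow> nat set set" where
  "BDu \<delta> = {A. upper_banach_density A \<ge> \<delta>}"

definition Dl :: "real \<Rightarrow> nat set set" where
  "Dl \<delta> = {A. lower_density A \<ge> ereal \<delta>}"

definition Du :: "real \<Rightarrow> nat set set" where
  "Du \<delta> = {A. upper_density A \<ge> ereal \<delta>}"

definition cofinite_fam :: "nat set set" where
  "cofinite_fam = {A. finite (UNIV - A)}"

definition thick_fam :: "nat set set" where
  "thick_fam = {A. \<forall>m::nat. m \<ge> 1 \<longrightarrow> (\<exists>a. {a..a+m} \<subseteq> A)}"

definition syndetic :: "nat set \<Rightarrow> bool" where
  "syndetic A \<longleftrightarrow> (\<exists>g. \<forall>n. \<exists>a\<in>A. n \<le> a \<and> a \<le> n + g)"

definition thickly_syndetic_fam :: "nat set set" where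
  "thickly_syndetic_fam = {A. \<forall>m::nat. m \<ge> 1 \<longrightarrow>
      (\<exists>B. syndetic B \<and> {b + k | b k. b \<in> B \<and> k \<le> m} \<subseteq> A)}"

definition periodic_le :: "('a \<Rightarrow> 'a) \<Rightarrow> 'a \<Rightarrow> nat \<Rightarrow> bool" where
  "periodic_le T x p \<longleftrightarrow> (\<exists>k. 1 \<le> k \<and> k \<le> p \<and> (T ^^ k) x = x)"

end

theory Submission
  imports Defs
begin

definition wc :: "nat set \<Rightarrow> nat \<Rightarrow> nat \<Rightarrow> nat" where
  "wc A n M = card (A \<inter> {n+1..n+M})"

lemma wc_le: "wc A n M \<le> M"
proof -
  have "card (A \<inter> {n+1..n+M}) \<le> card {n+1..n+M}" by (rule card_mono) auto
  then show ?thesis by (simp add: wc_def)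
qed

lemma wc_add: "wc A n (M+N) = wc A n M + wc A (n+M) N"
proof -
  have "A \<inter> {n+1..n+(M+N)} = (A \<inter> {n+1..n+M}) \<union> (A \<inter> {n+M+1..n+M+N})" by auto
  moreover have "(A \<inter> {n+1..n+M}) \<inter> (A \<inter> {n+M+1..n+M+N}) = {}" by auto
  ultimately show ?thesis unfolding wc_def by (simp add: card_Un_disjoint add.assoc)
qed

lemma wc_compl: "wc (-A) n M = M - wc A n M"
proof -
  have "{n+1..n+M} = (A \<inter> {n+1..n+M}) \<union> (-A \<inter> {n+1..n+M})" by auto
  then have "card {n+1..n+M} = card (A \<inter> {n+1..n+M}) + card (-A \<inter> {n+1..n+M})"
    by (metis card_Un_disjoint finite_Int finite_atLeastAtMost Int_assoc Int_commute
        Compl_disjoint Int_empty_left)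
  then have "M = wc A n M + wc (-A) n M" unfolding wc_def by simp
  then show ?thesis by simp
qed

definition H :: "nat set \<Rightarrow> nat \<Rightarrow> nat" where
  "H A M = Max (range (\<lambda>n. wc A n M))"

lemma H_fin: "finite (range (\<lambda>n. wc A n M))"
  by (rule finite_subset[of _ "{0..M}"]) (auto simp: wc_le)

lemma wc_le_H: "wc A n M \<le> H A M"
  unfolding H_def using H_fin by (intro Max_ge) auto

lemma H_attained: "\<exists>n. wc A n M = H A M"
proof -
  have "H A M \<in> range (\<lambda>n. wc A n M)" unfolding H_def using H_fin by (intro Max_in) auto
  then show ?thesis by auto
qed

lemma H_le: "H A M \<le> M"
  using H_attained wc_le by metis

lemma H_subadd: "H A (M+N) \<le> H A M + H A N"
proof -
  obtain n where "wc A n (M+N) = H A (M+N)" using H_attained by metis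
  then show ?thesis using wc_add[of A n M N] wc_le_H[of A n M] wc_le_H[of A "n+M" N] by simp
qed

lemma subadd_mult:
  fixes h :: "nat \<Rightarrow> nat"
  assumes sub: "\<And>m n. h (m+n) \<le> h m + h n" and h0: "h 0 = 0"
  shows "h (q*m) \<le> q * h m"
proof (induction q)
  case 0 then show ?case using h0 by simp
next
  case (Suc q)
  have "h (Suc q * m) = h (m + q*m)" by simp
  also have "\<dots> \<le> h m + h (q*m)" by (rule sub)
  also have "\<dots> \<le> Suc q * h m" using Suc by simp
  finally show ?case .
qed

lemma fekete:
  fixes h :: "nat \<Rightarrow> nat"
  assumes sub: "\<And>m n. h (m+n) \<le> h m + h n" and bd: "\<And>n. h n \<le> n"
  shows "convergent (\<lambda>n. real (h n) / real n)"
proof -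
  define S where "S = {real (h n) / real n | n. n \<ge> 1}"
  define L where "L = Inf S"
  have Sne: "S \<noteq> {}" unfolding S_def by auto
  have Sbdd: "bdd_below S" unfolding S_def by (intro bdd_belowI[of _ 0]) auto
  have h0: "h 0 = 0" using bd[of 0] by simp
  have low: "L \<le> real (h n) / real n" if "n \<ge> 1" for n
    unfolding L_def using Sbdd that by (intro cInf_lower) (auto simp: S_def)
  have "(\<lambda>n. real (h n) / real n) \<longlonglongrightarrow> L"
  proof (rule LIMSEQ_I)
    fix r :: real assume r: "r > 0"
    have "Inf S < L + r/2" using r by (simp add: L_def)
    then obtain y where "y \<in> S" "y < L + r/2" using cInf_lessD[OF Sne] by blast
    then obtain m where m1: "m \<ge> 1" and hm: "real (h m) / real m < L + r/2"
      unfolding S_def by auto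
    obtain N :: nat where N: "N > 2 * real m / r" using reals_Archimedean2 by blast
    show "\<exists>no. \<forall>n\<ge>no. norm (real (h n) / real n - L) < r"
    proof (intro exI allI impI)
      fix n assume n: "n \<ge> N + 1"
      define q where "q = n div m"
      define s where "s = n mod m"
      have ns: "n = q*m + s" by (simp add: q_def s_def)
      have "h n \<le> h (q*m) + h s" using sub ns by metis
      also have "\<dots> \<le> q * h m + m"
        using subadd_mult[OF sub h0, of q m] bd[of s] m1
        by (metis add_le_mono less_imp_le_nat mod_less_divisor s_def le_less_trans
              less_eq_nat.simps(1) not_less_eq_eq zero_less_iff_neq_zero One_nat_def)
      finally have hn: "real (h n) \<le> real q * real (h m) + real m" by (metis of_nat_add of_nat_le_iff of_nat_mult)
      have npos: "real n > 0" using n by simp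
      have qm: "real q * real m \<le> real n" using ns by (metis le_add1 of_nat_le_iff of_nat_mult)
      have "real q * real (h m) = (real q * real m) * (real (h m) / real m)" using m1 by simp
      also have "\<dots> \<le> real n * (real (h m) / real m)"
        by (intro mult_right_mono qm) simp
      finally have "real (h n) \<le> real n * (real (h m) / real m) + real m" using hn by linarith
      then have "real (h n) / real n \<le> real (h m) / real m + real m / real n"
        using npos by (simp add: field_simps)
      moreover have "real m / real n < r/2"
      proof -
        have "real N < real n" using n by simp
        then have "2 * real m / r < real n" using N by linarith
        then show ?thesis using r npos by (simp add: field_simps)
      qed
      moreover have "L \<le> real (h n) / real n" using low n by simp
      ultimately have "real (h n) / real n - L < r" "0 \<le> real (h n) / real n - L" using hm by linarith+
      then show "norm (real (h n) / real n - L) < r" by simp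
    qed
  qed
  then show ?thesis by (rule convergentI)
qed
lemma div_real_bounds:
  fixes M d :: nat assumes "d \<ge> 1"
  shows "real (M div d) \<le> real M / real d" "real M / real d - 1 \<le> real (M div d)"
proof -
  have e: "real M = real d * real (M div d) + real (M mod d)"
    by (metis div_mult_mod_eq of_nat_add of_nat_mult mult.commute)
  have "real (M mod d) < real d" using assms by simp
  moreover have "real d > 0" using assms by simp
  ultimately show "real (M div d) \<le> real M / real d" "real M / real d - 1 \<le> real (M div d)"
    using e by (simp_all add: field_simps)
qed
lemma quot_eq: fixes u v d :: nat assumes "u < v" "u div d = v div d" "d > 0" shows "v - u < d"
proof -
  have a: "u = d * (u div d) + u mod d" by simp
  have b: "v = d * (v div d) + v mod d" by simp
  have "v = d * (u div d) + v mod d" using b assms(2) by metis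
  note a this
  moreover have "v mod d < d" using assms by simp
  ultimately show ?thesis using assms by linarith
qed

lemma card_le_win: "card (A \<inter> {Suc m..m+n}) \<le> n"
  using wc_le[of A m n] by (simp add: wc_def)

lemma wc_card: "card (A \<inter> {n+1..n+M}) = wc A n M" by (simp add: wc_def)

lemma ubd_seq_eq: "(SUP n. real (card (A \<inter> {n+1..n+M})) / real M) = real (H A M) / real M"
proof -
  obtain n0 where n0: "wc A n0 M = H A M" using H_attained by metis
  show ?thesis unfolding wc_card
  proof (rule cSup_eq_maximum)
    show "real (H A M) / real M \<in> range (\<lambda>n. real (wc A n M) / real M)" using n0[symmetric] by auto
    show "x \<le> real (H A M) / real M" if "x \<in> range (\<lambda>n. real (wc A n M) / real M)" for x
      using that wc_le_H[of A _ M] by (auto intro!: divide_right_mono)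
  qed
qed

lemma ubd_lim: "(\<lambda>M. SUP n. real (card (A \<inter> {n+1..n+M})) / real M) \<longlonglongrightarrow> upper_banach_density A"
proof -
  have c: "convergent (\<lambda>M. real (H A M) / real M)"
    by (rule fekete) (auto simp: H_subadd H_le)
  then show ?thesis unfolding upper_banach_density_def ubd_seq_eq
    by (simp add: convergent_LIMSEQ_iff)
qed

lemma lbd_seq_eq:
  assumes "M \<ge> 1"
  shows "(INF n. real (card (A \<inter> {n+1..n+M})) / real M) = 1 - real (H (-A) M) / real M"
proof -
  obtain n0 where n0: "wc (-A) n0 M = H (-A) M" using H_attained by metis
  have e: "wc A n M = M - wc (-A) n M" for n using wc_compl[of "-A" n M] by simp
  have HM: "H (-A) M \<le> M" by (rule H_le)
  have val: "real (M - H (-A) M) / real M = 1 - real (H (-A) M) / real M"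
    using assms HM by (simp add: of_nat_diff field_simps)
  show ?thesis unfolding wc_card val[symmetric]
  proof (rule cInf_eq_minimum)
    show "real (M - H (-A) M) / real M \<in> range (\<lambda>n. real (wc A n M) / real M)"
      by (rule range_eqI[of _ _ n0]) (simp add: e[of n0] n0)
    show "real (M - H (-A) M) / real M \<le> x" if xin: "x \<in> range (\<lambda>n. real (wc A n M) / real M)" for x
    proof -
      obtain n where "x = real (wc A n M) / real M" using xin by auto
      moreover have "M - H (-A) M \<le> wc A n M" using e[of n] wc_le_H[of "-A" n M] by simp
      ultimately show ?thesis by (auto intro!: divide_right_mono)
    qed
  qed
qed

lemma lbd_lim: "(\<lambda>M. INF n. real (card (A \<inter> {n+1..n+M})) / real M) \<longlonglongrightarrow> lower_banach_density A"
proof -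
  have c: "convergent (\<lambda>M. real (H (-A) M) / real M)"
    by (rule fekete) (auto simp: H_subadd H_le)
  then obtain L where L: "(\<lambda>M. real (H (-A) M) / real M) \<longlonglongrightarrow> L" by (auto simp: convergent_def)
  have "(\<lambda>M. 1 - real (H (-A) M) / real M) \<longlonglongrightarrow> 1 - L" by (intro tendsto_intros L)
  then have l: "(\<lambda>M. INF n. real (card (A \<inter> {n+1..n+M})) / real M) \<longlonglongrightarrow> 1 - L"
    apply (rule Lim_transform_eventually)
    apply (rule eventually_sequentiallyI[of 1])
    using lbd_seq_eq by metis
  then show ?thesis unfolding lower_banach_density_def by (simp add: limI)
qed

lemma lbd_le_ubd: "lower_banach_density A \<le> upper_banach_density A"
proof (rule LIMSEQ_le[OF lbd_lim ubd_lim])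
  show "\<exists>N. \<forall>n\<ge>N. (INF m. real (card (A \<inter> {m+1..m+n})) / real n)
          \<le> (SUP m. real (card (A \<inter> {m+1..m+n})) / real n)"
  proof (intro exI allI impI)
    fix n :: nat
    have bb: "bdd_below (range (\<lambda>m. real (card (A \<inter> {m+1..m+n})) / real n))"
      by (intro bdd_belowI[of _ 0]) auto
    have ba: "bdd_above (range (\<lambda>m. real (card (A \<inter> {m+1..m+n})) / real n))"
      by (intro bdd_aboveI[of _ 1]) (auto simp: card_le_win divide_le_eq_1)
    show "(INF m. real (card (A \<inter> {m+1..m+n})) / real n)
          \<le> (SUP m. real (card (A \<inter> {m+1..m+n})) / real n)"
      using cINF_lower[OF bb, of 0] cSUP_upper[OF _ ba, of 0] by force
  qed
qed

lemma ld_le_ud: "lower_density A \<le> upper_density A"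
  unfolding lower_density_def upper_density_def by (rule Liminf_le_Limsup) simp


definition sep :: "nat \<Rightarrow> nat set \<Rightarrow> bool" where
  "sep p A \<longleftrightarrow> (\<forall>a\<in>A. \<forall>b\<in>A. a < b \<longrightarrow> p < b - a)"

lemma sep_wc: assumes "sep p A" shows "wc A n M \<le> M div Suc p + 1"
proof -
  define f where "f a = (a - (n+1)) div Suc p" for a
  have inj: "inj_on f (A \<inter> {n+1..n+M})"
  proof (rule inj_onI)
    fix a b assume a: "a \<in> A \<inter> {n+1..n+M}" and b: "b \<in> A \<inter> {n+1..n+M}" and fab: "f a = f b"
    show "a = b"
    proof (rule ccontr)
      assume "a \<noteq> b"
      then consider "a < b" | "b < a" by linarith
      then show False
      proof cases
        case 1
        have "(b - (n+1)) - (a - (n+1)) < Suc p"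
          by (rule quot_eq) (use 1 a b fab in \<open>auto simp: f_def\<close>)
        moreover have "p < b - a" using assms 1 a b by (auto simp: sep_def)
        ultimately show False using a b by auto
      next
        case 2
        have "(a - (n+1)) - (b - (n+1)) < Suc p"
          by (rule quot_eq) (use 2 a b fab in \<open>auto simp: f_def\<close>)
        moreover have "p < a - b" using assms 2 a b by (auto simp: sep_def)
        ultimately show False using a b by auto
      qed
    qed
  qed
  have img: "f ` (A \<inter> {n+1..n+M}) \<subseteq> {0..M div Suc p}"
    by (auto simp: f_def intro!: div_le_mono)
  have "wc A n M = card (f ` (A \<inter> {n+1..n+M}))" using inj by (simp add: wc_def card_image)
  also have "\<dots> \<le> card {0..M div Suc p}" by (rule card_mono[OF _ img]) simp
  finally show ?thesis by simp
qed

lemma sep_seq: assumes "sep p A"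
  shows "real (wc A n M) / real M \<le> 1 / real (Suc p) + 1 / real M"
proof (cases "M = 0")
  case True then show ?thesis by simp
next
  case False
  have "real (wc A n M) \<le> real (M div Suc p) + 1" using sep_wc[OF assms, of n M]
    by (metis of_nat_1 of_nat_add of_nat_le_iff)
  also have "\<dots> \<le> real M / real (Suc p) + 1" using div_real_bounds(1)[of "Suc p" M] by simp
  finally have "real (wc A n M) \<le> real M / real (Suc p) + 1" .
  then have "real (wc A n M) / real M \<le> (real M / real (Suc p) + 1) / real M"
    by (intro divide_right_mono) auto
  also have "\<dots> = 1 / real (Suc p) + 1 / real M" using False by (simp add: field_simps)
  finally show ?thesis .
qed

lemma sep_seq': "sep p A \<Longrightarrow> real (card (A \<inter> {Suc m..m+n})) / real n \<le> 1 / (1 + real p) + 1 / real n"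
  using sep_seq[of p A m n] by (simp add: wc_def)

lemma lim_c_1n: "(\<lambda>M. c + 1 / real M) \<longlonglongrightarrow> (c::real)"
  using tendsto_add[OF tendsto_const lim_1_over_n, of c] by simp

lemma lim_c_1n': "(\<lambda>M. c - 1 / real M) \<longlonglongrightarrow> (c::real)"
  using tendsto_diff[OF tendsto_const lim_1_over_n, of c] by simp

lemma ubd_sep: assumes "sep p A" shows "upper_banach_density A \<le> 1 / real (Suc p)"
proof (rule LIMSEQ_le[OF ubd_lim lim_c_1n])
  show "\<exists>N. \<forall>n\<ge>N. (SUP m. real (card (A \<inter> {m+1..m+n})) / real n) \<le> 1 / real (Suc p) + 1 / real n"
    by (intro exI allI impI cSUP_least) (auto simp: sep_seq'[OF assms])
qed

lemma ud_sep: assumes "sep p A" shows "upper_density A \<le> ereal (1 / real (Suc p))"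
proof -
  have "upper_density A \<le> Limsup sequentially (\<lambda>M. ereal (1 / real (Suc p) + 1 / real M))"
    unfolding upper_density_def
    using sep_seq[OF assms, of 0] by (intro Limsup_mono) (simp add: wc_def)
  also have "\<dots> = ereal (1 / real (Suc p))"
    by (intro lim_imp_Limsup) (auto intro!: tendsto_ereal lim_c_1n)
  finally show ?thesis .
qed

lemma wc_mult: assumes k: "k \<ge> 1" and A: "\<forall>j. k*j \<in> A" shows "M div k \<le> wc A n M"
proof -
  define g where "g i = k * (n div k + 1 + i)" for i
  have inj: "inj_on g {..<M div k}" using k by (auto simp: g_def inj_on_def)
  have img: "g ` {..<M div k} \<subseteq> A \<inter> {n+1..n+M}"
  proof
    fix y assume "y \<in> g ` {..<M div k}"
    then obtain i where i: "i < M div k" and y: "y = g i" by auto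
    have e1: "n = k*(n div k) + n mod k" by simp
    have e2: "n mod k < k" using k by simp
    have e3: "k * (n div k + 1) = k*(n div k) + k" by simp
    have n1: "n < k * (n div k + 1)" using e1 e2 e3 by linarith
    have n2: "k * (n div k) \<le> n" by (rule times_div_less_eq_dividend)
    have n3: "k * (M div k) \<le> M" by (rule times_div_less_eq_dividend)
    have "k * (n div k + 1 + i) \<le> k * (n div k) + k * (M div k)"
    proof -
      have "k * (1 + i) \<le> k * (M div k)" using i by (intro mult_le_mono2) simp
      then show ?thesis by (simp add: algebra_simps)
    qed
    moreover have "y = k * (n div k + 1 + i)" using y by (simp add: g_def)
    ultimately have "y \<le> n + M" using n2 n3 by linarith
    moreover have "n + 1 \<le> y" using n1 y by (simp add: g_def algebra_simps)
    moreover have "y \<in> A" using A[rule_format, of "n div k + 1 + i"] y by (simp only: g_def)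
    ultimately show "y \<in> A \<inter> {n+1..n+M}" by auto
  qed
  have "M div k = card (g ` {..<M div k})" using inj by (simp add: card_image)
  also have "\<dots> \<le> card (A \<inter> {n+1..n+M})" by (rule card_mono[OF _ img]) simp
  finally show ?thesis by (simp add: wc_def)
qed

lemma mult_seq: assumes k: "k \<ge> 1" and A: "\<forall>j. k*j \<in> A" and M: "M \<ge> 1"
  shows "1 / real k - 1 / real M \<le> real (wc A n M) / real M"
proof -
  have "real M / real k - 1 \<le> real (wc A n M)"
    using div_real_bounds(2)[OF k, of M] wc_mult[OF k A, of M n] by (meson of_nat_le_iff order_trans)
  then have "(real M / real k - 1) / real M \<le> real (wc A n M) / real M"
    by (intro divide_right_mono) auto
  moreover have "(real M / real k - 1) / real M = 1 / real k - 1 / real M" using M k by (simp add: field_simps)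
  ultimately show ?thesis by simp
qed

lemma mult_seq': "k \<ge> 1 \<Longrightarrow> \<forall>j. k*j \<in> A \<Longrightarrow> Suc 0 \<le> n \<Longrightarrow>
   1 / real k - 1 / real n \<le> real (card (A \<inter> {Suc m..m+n})) / real n"
  using mult_seq[of k A n m] by (simp add: wc_def)

lemma lbd_mult: assumes k: "k \<ge> 1" and A: "\<forall>j. k*j \<in> A"
  shows "1 / real k \<le> lower_banach_density A"
proof (rule LIMSEQ_le[OF lim_c_1n' lbd_lim])
  show "\<exists>N. \<forall>n\<ge>N. 1 / real k - 1 / real n \<le> (INF m. real (card (A \<inter> {m+1..m+n})) / real n)"
    by (intro exI[of _ 1] allI impI cINF_greatest) (auto simp: mult_seq'[OF k A])
qed

lemma ld_mult: assumes k: "k \<ge> 1" and A: "\<forall>j. k*j \<in> A"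
  shows "ereal (1 / real k) \<le> lower_density A"
proof -
  have "ereal (1 / real k) = Liminf sequentially (\<lambda>M. ereal (1 / real k - 1 / real M))"
    by (intro lim_imp_Liminf[symmetric]) (auto intro!: tendsto_ereal lim_c_1n')
  also have "\<dots> \<le> lower_density A"
    unfolding lower_density_def
    using mult_seq[OF k A, of _ 0]
    by (intro Liminf_mono) (auto simp: wc_def eventually_sequentially intro!: exI[of _ 1])
  finally show ?thesis .
qed


lemma cont_funpow: fixes T :: "'a::topological_space \<Rightarrow> 'a" assumes "continuous_on UNIV T" shows "continuous_on UNIV (T ^^ n)"
proof (induction n)
  case 0
  have "T ^^ 0 = (\<lambda>x. x)" by (rule ext) simp
  then show ?case by (simp add: continuous_on_id)
next
  case (Suc n)
  have "continuous_on UNIV (T \<circ> (T ^^ n))"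
    by (rule continuous_on_compose[OF Suc]) (rule continuous_on_subset[OF assms], simp)
  moreover have "T ^^ Suc n = T \<circ> (T ^^ n)" by (rule ext) simp
  ultimately show ?case by simp
qed

lemma funpow_period: assumes "(T ^^ k) x = x" shows "(T ^^ (k*j)) x = x"
proof (induction j)
  case 0 then show ?case by simp
next
  case (Suc j)
  have "(T ^^ (k * Suc j)) x = (T ^^ k) ((T ^^ (k*j)) x)" by (simp add: funpow_add)
  then show ?case using Suc assms by simp
qed

lemma nbhd_mem: "nbhd U x \<Longrightarrow> x \<in> U" by (auto simp: nbhd_def)

lemma open_nbhd: "open U \<Longrightarrow> x \<in> U \<Longrightarrow> nbhd U x" by (auto simp: nbhd_def)

lemma sep_nbhd:
  fixes T :: "'a::t2_space \<Rightarrow> 'a"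
  assumes cont: "continuous_on UNIV T" and np: "\<not> periodic_le T x p"
  shows "\<exists>U. open U \<and> x \<in> U \<and> sep p (return_set T x U)"
proof -
  have "\<forall>k\<in>{1..p}. \<exists>U. open U \<and> x \<in> U \<and> (\<forall>y\<in>U. (T ^^ k) y \<notin> U)"
  proof
    fix k assume k: "k \<in> {1..p}"
    then have ne: "x \<noteq> (T ^^ k) x" using np by (auto simp: periodic_le_def)
    obtain V W where VW: "open V" "open W" "x \<in> V" "(T ^^ k) x \<in> W" "V \<inter> W = {}"
      using hausdorff[OF ne] by blast
    define U where "U = V \<inter> (T ^^ k) -` W"
    have "open U" unfolding U_def
      using VW cont_funpow[OF cont, of k] by (intro open_Int open_vimage) auto
    moreover have "x \<in> U" using VW by (simp add: U_def)
    moreover have "\<forall>y\<in>U. (T ^^ k) y \<notin> U" using VW by (auto simp: U_def)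
    ultimately show "\<exists>U. open U \<and> x \<in> U \<and> (\<forall>y\<in>U. (T ^^ k) y \<notin> U)" by blast
  qed
  then obtain f where f: "\<forall>k\<in>{1..p}. open (f k) \<and> x \<in> f k \<and> (\<forall>y\<in>f k. (T ^^ k) y \<notin> f k)"
    by metis
  define U where "U = (\<Inter>k\<in>{1..p}. f k)"
  have "open U" unfolding U_def using f by (intro open_INT) auto
  moreover have "x \<in> U" using f by (auto simp: U_def)
  moreover have "sep p (return_set T x U)"
    unfolding sep_def
  proof (intro ballI impI)
    fix a b assume a: "a \<in> return_set T x U" and b: "b \<in> return_set T x U" and ab: "a < b"
    show "p < b - a"
    proof (rule ccontr)
      assume "\<not> p < b - a"
      then have k: "b - a \<in> {1..p}" using ab by auto
      have ya: "(T ^^ a) x \<in> f (b - a)" using a k by (auto simp: return_set_def U_def)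
      have "(T ^^ b) x = (T ^^ (b - a)) ((T ^^ a) x)" using ab
        by (metis funpow_add le_add_diff_inverse2 less_imp_le o_apply)
      then have "(T ^^ (b - a)) ((T ^^ a) x) \<in> f (b - a)" using b k by (auto simp: return_set_def U_def)
      then show False using f k ya by blast
    qed
  qed
  ultimately show ?thesis by blast
qed

lemma per_imp:
  assumes k: "k \<ge> 1" and per: "(T ^^ k) x = x" and d: "\<delta> \<le> 1 / real k"
  shows "F_recurrent_point (BDl \<delta>) T x" "F_recurrent_point (Dl \<delta>) T x"
        "F_recurrent_point (Du \<delta>) T x" "F_recurrent_point (BDu \<delta>) T x"
proof -
  have A: "\<forall>j. k*j \<in> return_set T x U" if "nbhd U x" for U
    using nbhd_mem[OF that] funpow_period[OF per] by (simp add: return_set_def)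
  have lb: "\<delta> \<le> lower_banach_density (return_set T x U)" if "nbhd U x" for U
    using lbd_mult[OF k A[OF that]] d by linarith
  have ld: "ereal \<delta> \<le> lower_density (return_set T x U)" if "nbhd U x" for U
    using ld_mult[OF k A[OF that]] d by (meson ereal_less_eq(3) order_trans)
  show "F_recurrent_point (BDl \<delta>) T x" using lb by (simp add: F_recurrent_point_def BDl_def)
  show "F_recurrent_point (Dl \<delta>) T x" using ld by (simp add: F_recurrent_point_def Dl_def)
  show "F_recurrent_point (Du \<delta>) T x" using ld ld_le_ud
    by (auto simp: F_recurrent_point_def Du_def intro: order_trans)
  show "F_recurrent_point (BDu \<delta>) T x" using lb lbd_le_ubd
    by (auto simp: F_recurrent_point_def BDu_def intro: order_trans)
qed

lemma nonper_imp:
  fixes T :: "'a::t2_space \<Rightarrow> 'a"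
  assumes cont: "continuous_on UNIV T" and np: "\<not> periodic_le T x p"
    and d: "1 / real (Suc p) < \<delta>"
  shows "\<not> F_recurrent_point (BDl \<delta>) T x" "\<not> F_recurrent_point (Dl \<delta>) T x"
        "\<not> F_recurrent_point (Du \<delta>) T x" "\<not> F_recurrent_point (BDu \<delta>) T x"
proof -
  obtain U where U: "open U" "x \<in> U" "sep p (return_set T x U)" using sep_nbhd[OF cont np] by blast
  have nb: "nbhd U x" using U by (simp add: open_nbhd)
  define A where "A = return_set T x U"
  have ub: "upper_banach_density A < \<delta>" using ubd_sep[OF U(3)] d unfolding A_def by linarith
  have lb: "lower_banach_density A < \<delta>" using ub lbd_le_ubd[of A] by linarith
  have "ereal (1 / real (Suc p)) < ereal \<delta>" using d by simp
  then have ud: "upper_density A < ereal \<delta>" using ud_sep[OF U(3)] unfolding A_def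
    by (meson le_less_trans)
  have ld: "lower_density A < ereal \<delta>" using ud ld_le_ud[of A] by (meson le_less_trans)
  show "\<not> F_recurrent_point (BDl \<delta>) T x" using nb lb
    by (auto simp: F_recurrent_point_def BDl_def A_def intro!: exI[of _ U])
  show "\<not> F_recurrent_point (BDu \<delta>) T x" using nb ub
    by (auto simp: F_recurrent_point_def BDu_def A_def intro!: exI[of _ U])
  show "\<not> F_recurrent_point (Dl \<delta>) T x" using nb ld
    by (auto simp: F_recurrent_point_def Dl_def A_def intro!: exI[of _ U])
  show "\<not> F_recurrent_point (Du \<delta>) T x" using nb ud
    by (auto simp: F_recurrent_point_def Du_def A_def intro!: exI[of _ U])
qed


lemma delta_p:
  assumes "0 < \<delta>" "\<delta> \<le> 1"
  shows "nat \<lfloor>1/\<delta>\<rfloor> \<ge> 1" "\<And>k. k \<le> nat \<lfloor>1/\<delta>\<rfloor> \<Longrightarrow> k \<ge> 1 \<Longrightarrow> \<delta> \<le> 1 / real k"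
        "1 / real (Suc (nat \<lfloor>1/\<delta>\<rfloor>)) < \<delta>"
proof -
  have g1: "1/\<delta> \<ge> 1" using assms by (simp add: field_simps)
  then show "nat \<lfloor>1/\<delta>\<rfloor> \<ge> 1" by linarith
  have "\<lfloor>1/\<delta>\<rfloor> \<ge> 0" using g1 by linarith
  then have fl: "real (nat \<lfloor>1/\<delta>\<rfloor>) = of_int \<lfloor>1/\<delta>\<rfloor>" by (rule of_nat_nat)
  show "\<delta> \<le> 1 / real k" if "k \<le> nat \<lfloor>1/\<delta>\<rfloor>" "k \<ge> 1" for k
  proof -
    have "real k \<le> 1/\<delta>" using that fl of_int_floor_le[of "1/\<delta>"]
      by (metis of_nat_le_iff order_trans)
    then show ?thesis using assms that by (simp add: field_simps)
  qed
  have "1/\<delta> < real (Suc (nat \<lfloor>1/\<delta>\<rfloor>))" using fl by linarith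
  then have "1 < real (Suc (nat \<lfloor>1/\<delta>\<rfloor>)) * \<delta>" using assms by (simp add: divide_less_eq)
  then show "1 / real (Suc (nat \<lfloor>1/\<delta>\<rfloor>)) < \<delta>"
    by (simp only: divide_less_eq mult.commute) simp
qed

lemma partA:
  fixes T :: "'a::t2_space \<Rightarrow> 'a"
  assumes cont: "continuous_on UNIV T" and d: "0 < \<delta>" "\<delta> \<le> 1"
  shows "(periodic_le T x (nat \<lfloor>1 / \<delta>\<rfloor>) \<longleftrightarrow> F_recurrent_point (BDl \<delta>) T x) \<and>
        (periodic_le T x (nat \<lfloor>1 / \<delta>\<rfloor>) \<longleftrightarrow> F_recurrent_point (Dl \<delta>) T x) \<and>
        (periodic_le T x (nat \<lfloor>1 / \<delta>\<rfloor>) \<longleftrightarrow> F_recurrent_point (Du \<delta>) T x) \<and>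
        (periodic_le T x (nat \<lfloor>1 / \<delta>\<rfloor>) \<longleftrightarrow> F_recurrent_point (BDu \<delta>) T x)"
proof (cases "periodic_le T x (nat \<lfloor>1 / \<delta>\<rfloor>)")
  case True
  then obtain k where k: "1 \<le> k" "k \<le> nat \<lfloor>1 / \<delta>\<rfloor>" "(T ^^ k) x = x" by (auto simp: periodic_le_def)
  have "\<delta> \<le> 1 / real k" using delta_p(2)[OF d k(2) k(1)] .
  from per_imp[OF k(1) k(3) this] True show ?thesis by simp
next
  case False
  from nonper_imp[OF cont False delta_p(3)[OF d]] False show ?thesis by simp
qed

lemma per1: "periodic_le T x 1 \<longleftrightarrow> T x = x"
  unfolding periodic_le_def
proof
  assume "\<exists>k\<ge>1. k \<le> 1 \<and> (T ^^ k) x = x"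
  then obtain k where "k = 1" "(T ^^ k) x = x" by auto
  then show "T x = x" by simp
qed (intro exI[of _ 1], simp)

lemma fix_return: assumes "T x = x" "x \<in> U" shows "return_set T x U = UNIV"
proof -
  have "(T ^^ n) x = x" for n using funpow_period[where T=T and k=1 and x=x and j=n] assms(1) by simp
  then show ?thesis using assms(2) by (auto simp: return_set_def)
qed

theorem mainTheorem12:
  fixes T :: "'a::t2_space \<Rightarrow> 'a" and x :: 'a
  assumes "continuous_on UNIV T"
  shows
    "(\<forall>\<delta>::real. 0 < \<delta> \<and> \<delta> \<le> 1 \<longrightarrow>
        (periodic_le T x (nat \<lfloor>1 / \<delta>\<rfloor>) \<longleftrightarrow> F_recurrent_point (BDl \<delta>) T x) \<and>
        (periodic_le T x (nat \<lfloor>1 / \<delta>\<rfloor>) \<longleftrightarrow> F_recurrent_point (Dl \<delta>) T x) \<and>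
        (periodic_le T x (nat \<lfloor>1 / \<delta>\<rfloor>) \<longleftrightarrow> F_recurrent_point (Du \<delta>) T x) \<and>
        (periodic_le T x (nat \<lfloor>1 / \<delta>\<rfloor>) \<longleftrightarrow> F_recurrent_point (BDu \<delta>) T x))
     \<and> (\<forall>\<delta>::real. 0 < \<delta> \<and> \<delta> \<le> 1 \<longrightarrow> F_recurrent (BDu \<delta>) T \<longrightarrow>
          T ^^ fact (nat \<lfloor>1 / \<delta>\<rfloor>) = id)
     \<and> ((T x = x \<longleftrightarrow> F_recurrent_point cofinite_fam T x) \<and>
        (T x = x \<longleftrightarrow> F_recurrent_point thickly_syndetic_fam T x) \<and>
        (T x = x \<longleftrightarrow> F_recurrent_point thick_fam T x) \<and>
        (T x = x \<longleftrightarrow> (\<exists>\<delta>::real. 1/2 < \<delta> \<and> \<delta> \<le> 1 \<and> F_recurrent_point (BDu \<delta>) T x)) \<and>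
        (T x = x \<longleftrightarrow> (\<forall>U. nbhd U x \<longrightarrow> (\<exists>n. n \<in> return_set T x U \<and> Suc n \<in> return_set T x U))))"
proof -
  have A: "\<forall>\<delta>::real. 0 < \<delta> \<and> \<delta> \<le> 1 \<longrightarrow>
        (periodic_le T x (nat \<lfloor>1 / \<delta>\<rfloor>) \<longleftrightarrow> F_recurrent_point (BDl \<delta>) T x) \<and>
        (periodic_le T x (nat \<lfloor>1 / \<delta>\<rfloor>) \<longleftrightarrow> F_recurrent_point (Dl \<delta>) T x) \<and>
        (periodic_le T x (nat \<lfloor>1 / \<delta>\<rfloor>) \<longleftrightarrow> F_recurrent_point (Du \<delta>) T x) \<and>
        (periodic_le T x (nat \<lfloor>1 / \<delta>\<rfloor>) \<longleftrightarrow> F_recurrent_point (BDu \<delta>) T x)"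
    using partA[OF assms] by blast
  have B: "\<forall>\<delta>::real. 0 < \<delta> \<and> \<delta> \<le> 1 \<longrightarrow> F_recurrent (BDu \<delta>) T \<longrightarrow>
          T ^^ fact (nat \<lfloor>1 / \<delta>\<rfloor>) = id"
  proof (intro allI impI)
    fix \<delta> :: real assume d: "0 < \<delta> \<and> \<delta> \<le> 1" and rec: "F_recurrent (BDu \<delta>) T"
    let ?p = "nat \<lfloor>1 / \<delta>\<rfloor>"
    let ?S = "{y. F_recurrent_point (BDu \<delta>) T y}"
    have sub: "?S \<subseteq> {y. (T ^^ fact ?p) y = id y}"
    proof
      fix y assume "y \<in> ?S"
      then have "periodic_le T y ?p" using nonper_imp(4)[OF assms _ delta_p(3)] d by auto
      then obtain k where k: "1 \<le> k" "k \<le> ?p" "(T ^^ k) y = y" by (auto simp: periodic_le_def)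
      have "k dvd fact ?p" using k by (simp add: dvd_fact)
      then obtain j where "fact ?p = k * j" by (auto elim: dvdE)
      then show "y \<in> {y. (T ^^ fact ?p) y = id y}" using funpow_period[OF k(3)] by simp
    qed
    have cl: "closed {y. (T ^^ fact ?p) y = id y}"
      by (intro closed_Collect_eq cont_funpow[OF assms]) (simp add: continuous_on_id')
    have "closure ?S \<subseteq> {y. (T ^^ fact ?p) y = id y}" by (rule closure_minimal[OF sub cl])
    then have "\<forall>y. (T ^^ fact ?p) y = y" using rec by (auto simp: F_recurrent_def)
    then show "T ^^ fact ?p = id" by (intro ext) simp
  qed
  have C: "(T x = x \<longleftrightarrow> F_recurrent_point cofinite_fam T x) \<and>
        (T x = x \<longleftrightarrow> F_recurrent_point thickly_syndetic_fam T x) \<and>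
        (T x = x \<longleftrightarrow> F_recurrent_point thick_fam T x) \<and>
        (T x = x \<longleftrightarrow> (\<exists>\<delta>::real. 1/2 < \<delta> \<and> \<delta> \<le> 1 \<and> F_recurrent_point (BDu \<delta>) T x)) \<and>
        (T x = x \<longleftrightarrow> (\<forall>U. nbhd U x \<longrightarrow> (\<exists>n. n \<in> return_set T x U \<and> Suc n \<in> return_set T x U)))"
  proof (cases "T x = x")
    case True
    have R: "return_set T x U = UNIV" if "nbhd U x" for U using fix_return[of T x U] True nbhd_mem[OF that] by blast
    have s: "syndetic UNIV" unfolding syndetic_def by (intro exI[of _ 0]) auto
    have c1: "F_recurrent_point cofinite_fam T x"
      using R by (simp add: F_recurrent_point_def cofinite_fam_def)
    have c2: "F_recurrent_point thickly_syndetic_fam T x"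
      using R s by (auto simp: F_recurrent_point_def thickly_syndetic_fam_def intro!: exI[of _ UNIV])
    have c3: "F_recurrent_point thick_fam T x"
      using R by (simp add: F_recurrent_point_def thick_fam_def)
    have "F_recurrent_point (BDu 1) T x" using per_imp(4)[where k=1 and \<delta>=1] True by simp
    then have c4: "\<exists>\<delta>::real. 1/2 < \<delta> \<and> \<delta> \<le> 1 \<and> F_recurrent_point (BDu \<delta>) T x"
      by (intro exI[of _ 1]) simp
    have c5: "\<forall>U. nbhd U x \<longrightarrow> (\<exists>n. n \<in> return_set T x U \<and> Suc n \<in> return_set T x U)"
      using R by auto
    show ?thesis using True c1 c2 c3 c4 c5 by blast
  next
    case False
    then have np: "\<not> periodic_le T x 1" using per1[of T x] by blast
    obtain U where U: "open U" "x \<in> U" "sep 1 (return_set T x U)" using sep_nbhd[OF assms np] by blast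
    have nb: "nbhd U x" using U by (simp add: open_nbhd)
    define A where "A = return_set T x U"
    have noc: "\<not> (n \<in> A \<and> Suc n \<in> A)" for n
    proof
      assume "n \<in> A \<and> Suc n \<in> A"
      have s1: "\<forall>a\<in>A. \<forall>b\<in>A. a < b \<longrightarrow> 1 < b - a" using U(3) by (simp add: sep_def A_def)
      have "n < Suc n" by simp
      then have "Suc 0 < Suc n - n" using s1 \<open>n \<in> A \<and> Suc n \<in> A\<close> by (metis One_nat_def)
      then show False by simp
    qed
    have c1: "\<not> F_recurrent_point cofinite_fam T x"
    proof
      assume "F_recurrent_point cofinite_fam T x"
      then have "finite (UNIV - A)" using nb by (auto simp: F_recurrent_point_def cofinite_fam_def A_def)
      then obtain N where "\<forall>n\<in>UNIV - A. n \<le> N" using finite_nat_set_iff_bounded_le by blast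
      then have "Suc N \<in> A" "Suc (Suc N) \<in> A" by (metis Diff_iff UNIV_I not_less_eq_eq le_Suc_eq)+
      then show False using noc by blast
    qed
    have c2: "\<not> F_recurrent_point thickly_syndetic_fam T x"
    proof
      assume "F_recurrent_point thickly_syndetic_fam T x"
      then obtain B where B: "syndetic B" "{b + k | b k. b \<in> B \<and> k \<le> 1} \<subseteq> A"
        using nb by (force simp: F_recurrent_point_def thickly_syndetic_fam_def A_def)
      obtain b where "b \<in> B" using B(1) by (auto simp: syndetic_def)
      then have "b + 0 \<in> A" "b + 1 \<in> A" using B(2) by blast+
      then show False using noc by simp
    qed
    have c3: "\<not> F_recurrent_point thick_fam T x"
    proof
      assume "F_recurrent_point thick_fam T x"
      then obtain a where "{a..a+1} \<subseteq> A"
        using nb by (force simp: F_recurrent_point_def thick_fam_def A_def)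
      then have "a \<in> A" "Suc a \<in> A" by auto
      then show False using noc by blast
    qed
    have c4: "\<not> (\<exists>\<delta>::real. 1/2 < \<delta> \<and> \<delta> \<le> 1 \<and> F_recurrent_point (BDu \<delta>) T x)"
    proof
      assume "\<exists>\<delta>::real. 1/2 < \<delta> \<and> \<delta> \<le> 1 \<and> F_recurrent_point (BDu \<delta>) T x"
      then obtain \<delta> :: real where "1/2 < \<delta>" "F_recurrent_point (BDu \<delta>) T x" by blast
      moreover have "1 / real (Suc 1) < \<delta>" using \<open>1/2 < \<delta>\<close> by simp
      ultimately show False using nonper_imp(4)[OF assms np] by blast
    qed
    have c5: "\<not> (\<forall>U. nbhd U x \<longrightarrow> (\<exists>n. n \<in> return_set T x U \<and> Suc n \<in> return_set T x U))"
      using nb noc unfolding A_def by blast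
    show ?thesis using False c1 c2 c3 c4 c5 by blast
  qed
  show ?thesis using A B C by blast
qed

end
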